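(* Let $f$ be a non-constant meromorphic function on $\mathbb{C}$, let $\mathbb{S}^1=\{z\in\mathbb{C}:|z|=1\}$, and let $A\subset\mathbb{S}^1$ be a non-degenerate continuum. Let $\mathcal{C}'=\{(x,y)\in\mathbb{R}^2: P(x,y)=0\}\subset\mathbb{R}^2\cong\mathbb{C}$ be the real algebraic curve defined by a non-constant irreducible real polynomial $P(x,y)\in\mathbb{R}[x,y]$. If $f(A)\subset\mathcal{C}'$, then $f$ is a rational function. Moreover, if $\mathcal{C}'=\mathbb{S}^1$, then $f$ is a quotient of two finite Blaschke products.
   Context: A non-degenerate continuum is a compact connected set containing more than one point. The plane $\mathbb{R}^2$ is identified with $\mathbb{C}$ via $(x,y)\mapsto x+iy$. A finite Blaschke product is a function of the form $e^{i\theta}\prod_{j=1}^{n}\frac{z-a_j}{1-\overline{a_j}z}$ with $\theta\in\mathbb{R}$, $n\ge 0$, and $|a_j|<1$. *)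

theory Defs
  imports "HOL-Complex_Analysis.Complex_Analysis" "HOL-Computational_Algebra.Polynomial"
begin

text \<open>Bivariate real polynomials P(x,y) are represented as elements of (real poly) poly,
  i.e. polynomials in y whose coefficients are polynomials in x (R[x][y] = R[x,y]).\<close>

definition eval2 :: "real poly poly \<Rightarrow> real \<Rightarrow> real \<Rightarrow> real" where
  "eval2 P x y = poly (map_poly (\<lambda>q. poly q x) P) y"

definition alg_curve :: "real poly poly \<Rightarrow> complex set" where
  "alg_curve P = {z. eval2 P (Re z) (Im z) = 0}"

definition finite_blaschke :: "(complex \<Rightarrow> complex) \<Rightarrow> bool" where
  "finite_blaschke B \<longleftrightarrow> (\<exists>(\<theta>::real) (as::complex list).
      (\<forall>a\<in>set as. norm a < 1) \<and>
      B = (\<lambda>z. exp (\<i> * of_real \<theta>) * prod_list (map (\<lambda>a. (z - a) / (1 - cnj a * z)) as)))"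

definition rational_function :: "(complex \<Rightarrow> complex) \<Rightarrow> bool" where
  "rational_function f \<longleftrightarrow> (\<exists>p q :: complex poly. q \<noteq> 0 \<and>
      (\<forall>z. poly q z \<noteq> 0 \<longrightarrow> f z = poly p z / poly q z))"

definition blaschke_quotient :: "(complex \<Rightarrow> complex) \<Rightarrow> bool" where
  "blaschke_quotient f \<longleftrightarrow> (\<exists>B1 B2 S. finite_blaschke B1 \<and> finite_blaschke B2 \<and> finite S \<and>
      (\<forall>z. z \<notin> S \<longrightarrow> f z = B1 z / B2 z))"

end

theory Submission
  imports Defs "HOL-Computational_Algebra.Polynomial_Factorial" "HOL-Computational_Algebra.Field_as_Ring"
    "HOL-Computational_Algebra.Fundamental_Theorem_Algebra"
begin

lemma poly_hom_gen:
  fixes h :: "'a::comm_ring_1 \<Rightarrow> 'b::comm_ring_1"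
  assumes add: "\<And>a b. h (a + b) = h a + h b" and mult: "\<And>a b. h (a * b) = h a * h b"
      and z: "h 0 = 0"
  shows "h (poly p x) = poly (map_poly h p) (h x)"
proof (induction p rule: pCons_induct)
  case 0 then show ?case by (simp add: z)
next
  case (pCons a p) then show ?case by (simp add: map_poly_pCons[of h, OF z] add mult)
qed

lemma poly_cnj_map: "poly (map_poly cnj p) x = cnj (poly p (cnj x))"
  by (induction p rule: pCons_induct) (auto simp: map_poly_pCons)

lemma eval2_zero_imp:
  assumes "\<And>x y. eval2 P x y = 0"
  shows "P = 0"
proof (rule poly_eqI)
  fix j
  have "poly (coeff P j) x = 0" for x
  proof -
    have "map_poly (\<lambda>q. poly q x) P = 0"
      using assms unfolding eval2_def using poly_all_0_iff_0 by blast
    hence "coeff (map_poly (\<lambda>q. poly q x) P) j = 0" by simp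
    thus ?thesis by (simp add: coeff_map_poly)
  qed
  hence "coeff P j = 0" using poly_all_0_iff_0 by blast
  thus "coeff P j = coeff 0 j" by simp
qed

lemma rep_exists:
  fixes P :: "real poly poly"
  assumes "P \<noteq> 0"
  shows "\<exists>R::complex poly poly. R \<noteq> 0 \<and>
           (\<forall>u. poly (poly R [:u:]) (cnj u) = complex_of_real (eval2 P (Re u) (Im u)))"
proof -
  define X :: "complex poly poly" where "X = [: [:0, 1/2:], [:1/2:] :]"
  define Y :: "complex poly poly" where "Y = [: [:0, \<i>/2:], [:-\<i>/2:] :]"
  define C :: "real \<Rightarrow> complex poly poly" where "C = (\<lambda>c. [:[:complex_of_real c:]:])"
  define R where "R = poly (map_poly (\<lambda>q. poly (map_poly C q) X) P) Y"
  have key: "poly (poly R [:u:]) (cnj u) = complex_of_real (eval2 P (Re u) (Im u))" for u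
  proof -
    define ev where "ev = (\<lambda>T::complex poly poly. poly (poly T [:u:]) (cnj u))"
    have evadd: "ev (a + b) = ev a + ev b" for a b by (simp add: ev_def)
    have evmult: "ev (a * b) = ev a * ev b" for a b by (simp add: ev_def)
    have ev0: "ev 0 = 0" by (simp add: ev_def)
    have evX: "ev X = of_real (Re u)"
      by (simp add: ev_def X_def complex_eq_iff)
    have evY: "ev Y = of_real (Im u)"
      by (simp add: ev_def Y_def complex_eq_iff algebra_simps)
    have evC: "ev (C c) = of_real c" for c by (simp add: ev_def C_def)
    have inner: "ev (poly (map_poly C q) X) = of_real (poly q (Re u))" for q
    proof -
      have "ev (poly (map_poly C q) X) = poly (map_poly ev (map_poly C q)) (ev X)"
        by (rule poly_hom_gen[OF evadd evmult ev0])
      also have "map_poly ev (map_poly C q) = map_poly (ev \<circ> C) q"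
        by (rule map_poly_map_poly) (simp_all add: ev0 C_def)
      also have "ev \<circ> C = complex_of_real" by (auto simp: evC)
      also have "poly (map_poly complex_of_real q) (ev X) = of_real (poly q (Re u))"
        unfolding evX by (rule poly_hom_gen[symmetric]) auto
      finally show ?thesis .
    qed
    have "ev R = poly (map_poly ev (map_poly (\<lambda>q. poly (map_poly C q) X) P)) (ev Y)"
      unfolding R_def by (rule poly_hom_gen[OF evadd evmult ev0])
    also have "map_poly ev (map_poly (\<lambda>q. poly (map_poly C q) X) P)
               = map_poly (ev \<circ> (\<lambda>q. poly (map_poly C q) X)) P"
      by (rule map_poly_map_poly) (simp_all add: ev0 C_def)
    also have "ev \<circ> (\<lambda>q. poly (map_poly C q) X) = complex_of_real \<circ> (\<lambda>q. poly q (Re u))"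
      by (auto simp: inner)
    also have "map_poly (complex_of_real \<circ> (\<lambda>q. poly q (Re u))) P
               = map_poly complex_of_real (map_poly (\<lambda>q. poly q (Re u)) P)"
      by (rule map_poly_map_poly[symmetric]) simp_all
    also have "poly (map_poly complex_of_real (map_poly (\<lambda>q. poly q (Re u)) P)) (ev Y)
               = of_real (eval2 P (Re u) (Im u))"
      unfolding evY eval2_def by (rule poly_hom_gen[symmetric]) auto
    finally show ?thesis by (simp add: ev_def)
  qed
  have "R \<noteq> 0"
  proof
    assume "R = 0"
    hence "eval2 P x y = 0" for x y
      using key[of "Complex x y"] by simp
    hence "P = 0" by (rule eval2_zero_imp)
    with assms show False by simp
  qed
  with key show ?thesis by blast
qed

lemma poly_mero: "f meromorphic_on A \<Longrightarrow> (\<lambda>z. poly c (f z)) meromorphic_on A"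
  unfolding poly_altdef by (intro meromorphic_intros) auto

lemma poly_holo: "f holomorphic_on A \<Longrightarrow> (\<lambda>z. poly c (f z)) holomorphic_on A"
  unfolding poly_altdef by (intro holomorphic_intros) auto

lemma poly_bound:
  fixes z :: complex
  assumes "norm z \<ge> 1"
  shows "norm (poly p z) \<le> (\<Sum>i\<le>degree p. norm (coeff p i)) * norm z ^ degree p"
proof -
  have "norm (poly p z) \<le> (\<Sum>i\<le>degree p. norm (coeff p i * z ^ i))"
    unfolding poly_altdef by (rule norm_sum)
  also have "\<dots> \<le> (\<Sum>i\<le>degree p. norm (coeff p i) * norm z ^ degree p)"
  proof (rule sum_mono)
    fix i assume "i \<in> {..degree p}"
    hence "norm z ^ i \<le> norm z ^ degree p" using assms by (intro power_increasing) auto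
    thus "norm (coeff p i * z ^ i) \<le> norm (coeff p i) * norm z ^ degree p"
      by (simp add: norm_mult norm_power mult_left_mono)
  qed
  finally show ?thesis by (simp add: sum_distrib_right)
qed

lemma cauchy_bound:
  fixes a :: "nat \<Rightarrow> complex"
  assumes an: "a n \<noteq> 0" and eq: "(\<Sum>k\<le>n. a k * u ^ k) = 0"
  shows "norm u \<le> 1 + (\<Sum>k<n. norm (a k)) / norm (a n)"
proof (cases "norm u \<le> 1")
  case True
  have "0 \<le> (\<Sum>k<n. norm (a k)) / norm (a n)" by (intro divide_nonneg_nonneg sum_nonneg) auto
  with True show ?thesis by linarith
next
  case False
  hence u1: "norm u > 1" by simp
  show ?thesis
  proof (cases n)
    case 0 with an eq show ?thesis by simp
  next
    case (Suc m)
    have split: "(\<Sum>k\<le>n. a k * u ^ k) = (\<Sum>k<n. a k * u ^ k) + a n * u ^ n"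
      using Suc by (simp add: lessThan_Suc_atMost[symmetric])
    hence "a n * u ^ n = - (\<Sum>k<n. a k * u ^ k)" using eq by (simp add: eq_neg_iff_add_eq_0 add.commute)
    hence "norm (a n) * norm u ^ n = norm (\<Sum>k<n. a k * u ^ k)"
      by (metis norm_minus_cancel norm_mult norm_power)
    also have "\<dots> \<le> (\<Sum>k<n. norm (a k) * norm u ^ m)"
    proof -
      have "norm (\<Sum>k<n. a k * u ^ k) \<le> (\<Sum>k<n. norm (a k * u ^ k))" by (rule norm_sum)
      also have "\<dots> \<le> (\<Sum>k<n. norm (a k) * norm u ^ m)"
      proof (rule sum_mono)
        fix k assume "k \<in> {..<n}"
        hence "k \<le> m" using Suc by auto
        hence "norm u ^ k \<le> norm u ^ m" using u1 by (intro power_increasing) auto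
        thus "norm (a k * u ^ k) \<le> norm (a k) * norm u ^ m"
          by (simp add: norm_mult norm_power mult_left_mono)
      qed
      finally show ?thesis .
    qed
    also have "\<dots> = (\<Sum>k<n. norm (a k)) * norm u ^ m" by (simp add: sum_distrib_right)
    finally have "norm (a n) * norm u * norm u ^ m \<le> (\<Sum>k<n. norm (a k)) * norm u ^ m"
      using Suc by (simp add: mult_ac)
    moreover have "0 < norm u ^ m" using u1 by (intro zero_less_power) linarith
    ultimately have "norm (a n) * norm u \<le> (\<Sum>k<n. norm (a k))"
      by (simp add: mult_le_cancel_right)
    hence "norm u \<le> (\<Sum>k<n. norm (a k)) / norm (a n)"
      using an by (simp add: field_simps)
    thus ?thesis by linarith
  qed
qed

lemma mero_bound:
  assumes "h meromorphic_on {z0}"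
  shows "\<exists>N. \<forall>\<^sub>F w in at z0. \<forall>M\<ge>N. norm (h w) * norm (w - z0) ^ M \<le> 1"
proof (cases "\<forall>\<^sub>F w in at z0. h w = 0")
  case True
  show ?thesis by (rule exI[of _ 0]) (use True in \<open>eventually_elim, auto\<close>)
next
  case False
  hence freq: "\<exists>\<^sub>F w in at z0. h w \<noteq> 0" by (simp add: not_eventually)
  have iso: "isolated_singularity_at h z0" using assms meromorphic_on_isolated_singularity by blast
  have ness: "not_essential h z0" using assms meromorphic_on_not_essential by blast
  define n where "n = zorder h z0"
  define g where "g = zor_poly h z0"
  obtain r where r: "r > 0" "g holomorphic_on cball z0 r"
      "\<And>w. w \<in> cball z0 r - {z0} \<Longrightarrow> h w = g w * (w - z0) powi n"
    using zorder_exist[OF iso ness freq] unfolding n_def g_def by blast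
  have "compact (g ` cball z0 r)"
    using r(2) by (intro compact_continuous_image holomorphic_on_imp_continuous_on) auto
  then obtain B where B: "B > 0" "\<And>w. w \<in> cball z0 r \<Longrightarrow> norm (g w) \<le> B"
    using compact_imp_bounded bounded_pos by (metis imageI)
  define N where "N = nat (- n) + 1"
  show ?thesis
  proof (rule exI[of _ N])
    define e where "e = min r (min 1 (1/B))"
    have e: "e > 0" using r B by (auto simp: e_def)
    have key: "norm (h w) * norm (w - z0) ^ M \<le> 1"
      if w: "w \<noteq> z0" "dist w z0 < min r (min 1 (1 / B))" and M: "N \<le> M" for w M
    proof -
        define d where "d = norm (w - z0)"
        have d: "d > 0" "d < 1" "d < r" "d < 1 / B" using w by (auto simp: d_def dist_norm)
        have wc: "w \<in> cball z0 r - {z0}" using w d by (auto simp: d_def dist_norm norm_minus_commute)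
        have "norm (h w) * d ^ M = norm (g w) * (d powi n * d ^ M)"
          using r(3)[OF wc] by (simp add: norm_mult norm_power_int d_def)
        also have "d powi n * d ^ M = d powi (n + int M)"
          using d by (simp add: power_int_add)
        also have "n + int M \<ge> 1" using M unfolding N_def by linarith
        hence "d powi (n + int M) = d ^ nat (n + int M)"
          by (metis nat_0_le order_trans zero_le_one power_int_of_nat)
        also have "\<dots> \<le> d ^ 1"
          using d \<open>n + int M \<ge> 1\<close> by (intro power_decreasing) auto
        finally have "norm (h w) * d ^ M \<le> norm (g w) * d"
          by (simp add: mult_left_mono)
        also have "\<dots> \<le> B * (1 / B)"
          using B B(2)[of w] wc d by (intro mult_mono) auto
        finally show "norm (h w) * norm (w - z0) ^ M \<le> 1" using B by (simp add: d_def)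
      qed
    show "\<forall>\<^sub>F w in at z0. \<forall>M\<ge>N. norm (h w) * norm (w - z0) ^ M \<le> 1"
      unfolding eventually_at using e key unfolding e_def by blast
  qed
qed

lemma poles_sparse:
  assumes "f nicely_meromorphic_on UNIV"
  shows "{z. is_pole f z} sparse_in UNIV"
proof -
  have "eventually (\<lambda>z. \<not>is_pole f z) (cosparse UNIV)"
    using assms by (intro meromorphic_on_imp_not_pole_cosparse) (auto simp: nicely_meromorphic_on_def)
  thus ?thesis by (simp add: eventually_cosparse)
qed

lemma sparse_ne_UNIV:
  fixes T :: "complex set"
  assumes "T sparse_in UNIV" shows "UNIV - T \<noteq> {}"
proof
  assume "UNIV - T = {}"
  hence "T = UNIV" by auto
  with assms have "\<not> 0 islimpt (UNIV :: complex set)" unfolding sparse_in_open[OF open_UNIV] by auto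
  thus False by simp
qed

lemma nm_continuous_nonpole:
  assumes "f nicely_meromorphic_on UNIV" "\<not> is_pole f z"
  shows "isCont f z"
  using nicely_meromorphic_on_imp_analytic_at[OF assms(1) _ assms(2)] analytic_at_imp_isCont by blast

lemma poly_f_ev_nz:
  assumes f: "f nicely_meromorphic_on UNIV" and nc: "\<not> f constant_on UNIV" and c: "c \<noteq> 0"
  shows "\<forall>\<^sub>F w in at z0. poly c (f w) \<noteq> 0"
proof (rule ccontr)
  assume "\<not> (\<forall>\<^sub>F w in at z0. poly c (f w) \<noteq> 0)"
  hence freq: "\<exists>\<^sub>F w in at z0. poly c (f w) = 0" by (simp add: not_eventually)
  have gm: "(\<lambda>w. poly c (f w)) meromorphic_on UNIV"
    using f by (intro poly_mero) (auto simp: nicely_meromorphic_on_def)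
  from meromorphic_imp_constant_or_avoid[OF gm open_UNIV connected_UNIV, of 0]
  consider "eventually (\<lambda>z. poly c (f z) = 0) (cosparse UNIV)"
         | "eventually (\<lambda>z. poly c (f z) \<noteq> 0) (cosparse UNIV)" by blast
  thus False
  proof cases
    case 2
    hence "\<forall>\<^sub>F w in at z0. poly c (f w) \<noteq> 0"
      by (rule eventually_cosparse_imp_eventually_at) auto
    with freq show False by (simp add: frequently_def)
  next
    case 1
    hence Zs: "{z. poly c (f z) \<noteq> 0} sparse_in UNIV" by (simp add: eventually_cosparse)
    define T where "T = {z. is_pole f z} \<union> {z. poly c (f z) \<noteq> 0}"
    have Ts: "T sparse_in UNIV" unfolding T_def using poles_sparse[OF f] Zs by (rule sparse_in_union')
    define W where "W = UNIV - T"
    have Wo: "open W" unfolding W_def using Ts by (rule open_diff_sparse_pts[OF open_UNIV])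
    have Wc: "connected W" unfolding W_def using Ts by (intro sparse_imp_connected) auto
    have Wne: "W \<noteq> {}" unfolding W_def using Ts by (rule sparse_ne_UNIV)
    have "continuous_on W f"
      by (intro continuous_at_imp_continuous_on ballI nm_continuous_nonpole[OF f])
         (auto simp: W_def T_def)
    moreover have "finite (f ` W)"
    proof (rule finite_subset)
      show "f ` W \<subseteq> {x. poly c x = 0}" by (auto simp: W_def T_def)
      show "finite {x. poly c x = 0}" using c by (rule poly_roots_finite)
    qed
    ultimately have "f constant_on W" using Wc continuous_finite_range_constant by blast
    hence "f constant_on UNIV"
      by (rule constant_on_extend_nicely_meromorphic_on[OF f _ Wo open_UNIV connected_UNIV Wne]) auto
    with nc show False by simp
  qed
qed

lemma poly_poly_sum: "poly (poly (R::complex poly poly) [:u:]) v = (\<Sum>k\<le>degree R. poly (coeff R k) v * u ^ k)"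
  by (simp add: poly_altdef[of R] poly_sum poly_mult poly_power mult.commute)

lemma inv_cnj_circle: "norm z = 1 \<Longrightarrow> inverse (cnj z) = z"
proof -
  assume "norm z = 1"
  hence "z * cnj z = 1" using complex_norm_square[of z] by simp
  thus ?thesis by (intro inverse_unique) (simp add: mult.commute)
qed

lemma G_zero:
  fixes f :: "complex \<Rightarrow> complex" and R :: "complex poly poly"
  assumes f: "f nicely_meromorphic_on UNIV"
    and A: "A \<subseteq> sphere 0 1" "\<xi> \<in> A" "\<xi> islimpt A" "\<forall>z\<in>A. \<not> is_pole f z"
    and RA: "\<forall>z\<in>A. poly (poly R [:f z:]) (cnj (f z)) = 0"
    and z: "z \<noteq> 0" "\<not> is_pole f z" "\<not> is_pole f (inverse (cnj z))"
  shows "poly (poly R [:f z:]) (cnj (f (inverse (cnj z)))) = 0"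
proof -
  define Pl where "Pl = {z. is_pole f z}"
  have Pls: "Pl sparse_in UNIV" unfolding Pl_def using f by (rule poles_sparse)
  have Plc: "closed Pl" using Pls by (rule sparse_in_UNIV_imp_closed)
  have Plcount: "countable Pl" using sparse_imp_countable[OF open_UNIV Pls] by simp
  define \<iota> :: "complex \<Rightarrow> complex" where "\<iota> = (\<lambda>z. inverse (cnj z))"
  have \<iota>\<iota>: "\<iota> (\<iota> z) = z" for z by (simp add: \<iota>_def)
  define U where "U = UNIV - ({0} \<union> Pl \<union> \<iota> ` Pl)"
  have memU: "w \<in> U \<longleftrightarrow> w \<noteq> 0 \<and> w \<notin> Pl \<and> \<iota> w \<notin> Pl" for w
    unfolding U_def using \<iota>\<iota> by (auto simp: image_iff)
  have U_eq: "U = (-{0}) \<inter> (-Pl) \<inter> ((-{0}) \<inter> \<iota> -` (-Pl))"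
    using memU by auto
  have cont\<iota>: "continuous_on (-{0}) \<iota>"
    unfolding \<iota>_def by (intro continuous_intros) auto
  have Uo: "open U"
    unfolding U_eq using Plc
    by (intro open_Int continuous_open_preimage[OF cont\<iota>]) auto
  have Ucount: "countable ({0} \<union> Pl \<union> \<iota> ` Pl)" using Plcount by auto
  have Uconn: "connected U"
    unfolding U_def by (rule connected_open_diff_countable) (use Ucount in auto)
  have fan: "f analytic_on (-Pl)"
    by (rule nicely_meromorphic_without_singularities)
       (use nicely_meromorphic_on_subset[OF f] in \<open>auto simp: Pl_def\<close>)
  have fhol: "f holomorphic_on (-Pl)" using fan analytic_imp_holomorphic by blast
  define V where "V = cnj ` (-Pl)"
  have Vo: "open V" unfolding V_def image_cnj_conv_vimage_cnj using Plc
    by (intro open_vimage) (auto intro: continuous_intros)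
  have cV: "cnj ` V = -Pl" unfolding V_def by (auto simp: image_image)
  have h1: "cnj \<circ> f \<circ> cnj holomorphic_on V"
    by (rule holomorphic_on_compose_cnj_cnj) (use fhol cV Vo in auto)
  have h2: "inverse holomorphic_on U"
    using memU by (intro holomorphic_intros) auto
  have h3: "inverse ` U \<subseteq> V"
  proof
    fix y assume "y \<in> inverse ` U"
    then obtain w where w: "w \<in> U" "y = inverse w" by auto
    have "cnj y = \<iota> w" by (simp add: w \<iota>_def)
    hence "cnj y \<in> -Pl" using memU w by auto
    thus "y \<in> V" unfolding V_def by (metis complex_cnj_cnj image_eqI)
  qed
  have fshol: "(\<lambda>w. cnj (f (inverse (cnj w)))) holomorphic_on U"
  proof -
    have "(cnj \<circ> f \<circ> cnj) \<circ> inverse holomorphic_on U"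
      by (rule holomorphic_on_compose_gen[OF h2 h1 h3])
    thus ?thesis by (simp add: o_def)
  qed
  have fholU: "f holomorphic_on U" by (rule holomorphic_on_subset[OF fhol]) (auto simp: memU)
  define G where "G = (\<lambda>w. poly (poly R [:f w:]) (cnj (f (inverse (cnj w)))))"
  have Ghol: "G holomorphic_on U"
    unfolding G_def poly_poly_sum
    by (intro holomorphic_intros poly_holo fshol fholU)
  have AU: "A \<subseteq> U"
  proof
    fix w assume w: "w \<in> A"
    hence n1: "norm w = 1" using A by auto
    hence "\<iota> w = w" by (simp add: \<iota>_def inv_cnj_circle)
    thus "w \<in> U" using w n1 A(4) by (auto simp: memU Pl_def)
  qed
  have G0: "G w = 0" if "w \<in> A" for w
  proof -
    have "norm w = 1" using that A by auto
    thus ?thesis using RA that by (simp add: G_def inv_cnj_circle)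
  qed
  have zU: "z \<in> U" using z by (auto simp: memU Pl_def \<iota>_def)
  have "G z = 0"
    by (rule analytic_continuation[OF Ghol Uo Uconn AU _ A(3) G0 zU]) (use AU A(2) in auto)
  thus ?thesis by (simp add: G_def)
qed

lemma map_poly_cnj_eq0: "map_poly cnj p = 0 \<Longrightarrow> p = 0"
proof (rule poly_eqI)
  fix i assume "map_poly cnj p = 0"
  hence "coeff (map_poly cnj p) i = 0" by simp
  thus "coeff p i = coeff 0 i" by (simp add: coeff_map_poly)
qed

lemma growth:
  fixes f :: "complex \<Rightarrow> complex" and R :: "complex poly poly"
  assumes f: "f nicely_meromorphic_on UNIV" and nc: "\<not> f constant_on UNIV" and R: "R \<noteq> 0"
    and rel: "\<And>z. z \<noteq> 0 \<Longrightarrow> \<not>is_pole f z \<Longrightarrow> \<not> is_pole f (inverse (cnj z)) \<Longrightarrow>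
               poly (poly R [:f z:]) (cnj (f (inverse (cnj z)))) = 0"
  shows "\<exists>R0 C N. R0 \<ge> 1 \<and> C \<ge> 0 \<and> (\<forall>z. norm z \<ge> R0 \<longrightarrow> \<not> is_pole f z \<longrightarrow> norm (f z) \<le> C * norm z ^ N)"
proof -
  define n where "n = degree R"
  define bt where "bt = (\<lambda>k. map_poly cnj (coeff R k))"
  define \<beta> where "\<beta> = (\<lambda>k w. poly (bt k) (f w))"
  have fm: "f meromorphic_on UNIV" using f by (simp add: nicely_meromorphic_on_def)
  have \<beta>m: "\<beta> k meromorphic_on {0}" for k
    unfolding \<beta>_def by (rule meromorphic_on_subset[OF poly_mero[OF fm]]) auto
  have btn: "bt n \<noteq> 0"
    using R map_poly_cnj_eq0 unfolding bt_def n_def by fastforce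
  have E1: "\<forall>\<^sub>F w in at 0. \<not> is_pole f w"
    by (rule eventually_not_pole, rule meromorphic_on_isolated_singularity)
       (rule meromorphic_on_subset[OF fm], auto)
  have E2: "\<forall>\<^sub>F w in at 0. \<beta> n w \<noteq> 0"
    unfolding \<beta>_def by (rule poly_f_ev_nz[OF f nc btn])
  have exN: "\<forall>k\<in>{..<n}. \<exists>N. \<forall>\<^sub>F w in at 0. \<forall>M\<ge>N. norm (\<beta> k w) * norm (w - 0) ^ M \<le> 1"
    using mero_bound[OF \<beta>m] by blast
  obtain Nf where Nf': "\<forall>k\<in>{..<n}. \<forall>\<^sub>F w in at 0. \<forall>M\<ge>Nf k. norm (\<beta> k w) * norm (w - 0) ^ M \<le> 1"
    using bchoice[OF exN] by blast
  have Nf: "\<forall>\<^sub>F w in at 0. \<forall>M\<ge>Nf k. norm (\<beta> k w) * norm (w - 0) ^ M \<le> 1" if "k \<in> {..<n}" for k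
    using Nf' that by blast
  define N1 where "N1 = (\<Sum>k<n. Nf k)"
  have NfN1: "Nf k \<le> N1" if "k < n" for k
    unfolding N1_def using that by (intro member_le_sum) auto
  have E3: "\<forall>\<^sub>F w in at 0. \<forall>k\<in>{..<n}. norm (\<beta> k w) * norm w ^ N1 \<le> 1"
  proof (rule eventually_ball_finite)
    show "\<forall>k\<in>{..<n}. \<forall>\<^sub>F w in at 0. norm (\<beta> k w) * norm w ^ N1 \<le> 1"
    proof
      fix k assume k: "k \<in> {..<n}"
      show "\<forall>\<^sub>F w in at 0. norm (\<beta> k w) * norm w ^ N1 \<le> 1"
        using Nf[OF k] by eventually_elim (use NfN1 k in auto)
    qed
  qed auto
  have "(\<lambda>w. inverse (\<beta> n w)) meromorphic_on {0}"
    by (intro meromorphic_intros \<beta>m)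
  then obtain N2 where E4: "\<forall>\<^sub>F w in at 0. \<forall>M\<ge>N2. norm (inverse (\<beta> n w)) * norm (w - 0) ^ M \<le> 1"
    using mero_bound by blast
  have "\<forall>\<^sub>F w in at 0. \<not> is_pole f w \<and> \<beta> n w \<noteq> 0 \<and> (\<forall>k\<in>{..<n}. norm (\<beta> k w) * norm w ^ N1 \<le> 1)
          \<and> norm (inverse (\<beta> n w)) * norm w ^ N2 \<le> 1"
    using E1 E2 E3 E4 by eventually_elim auto
  then obtain d where d: "d > 0" and dP: "\<And>w. w \<noteq> 0 \<Longrightarrow> dist w 0 < d \<Longrightarrow>
      \<not> is_pole f w \<and> \<beta> n w \<noteq> 0 \<and> (\<forall>k\<in>{..<n}. norm (\<beta> k w) * norm w ^ N1 \<le> 1)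
          \<and> norm (inverse (\<beta> n w)) * norm w ^ N2 \<le> 1"
    unfolding eventually_at by auto
  define R0 where "R0 = 1 + 1 / d"
  have bound: "norm (f z) \<le> (1 + real n) * norm z ^ (N1 + N2)"
    if z: "norm z \<ge> R0" "\<not> is_pole f z" for z
  proof -
    define w where "w = inverse (cnj z)"
    have dpos: "0 < 1/d" using d by simp
    have z1: "norm z \<ge> 1" "norm z > 0" using z(1) dpos unfolding R0_def by linarith+
    have nw: "norm w = inverse (norm z)" by (simp add: w_def norm_inverse)
    have "inverse (norm z) < d"
    proof -
      have "1 / d < norm z" using z(1) by (simp add: R0_def)
      thus ?thesis using d z1 by (simp add: field_simps)
    qed
    hence wd: "w \<noteq> 0" "dist w 0 < d" using z1 nw by (auto simp: w_def)
    note P = dP[OF wd]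
    have "z \<noteq> 0" using z1 by auto
    have eq0: "(\<Sum>k\<le>n. poly (coeff R k) (cnj (f w)) * f z ^ k) = 0"
      using rel[OF \<open>z \<noteq> 0\<close> z(2)] P unfolding w_def poly_poly_sum n_def by simp
    have ak: "poly (coeff R k) (cnj (f w)) = cnj (\<beta> k w)" for k
      by (simp add: \<beta>_def bt_def poly_cnj_map)
    have "norm (f z) \<le> 1 + (\<Sum>k<n. norm (poly (coeff R k) (cnj (f w)))) / norm (poly (coeff R n) (cnj (f w)))"
      by (rule cauchy_bound) (use eq0 P ak in auto)
    also have "\<dots> = 1 + (\<Sum>k<n. norm (\<beta> k w)) * norm (inverse (\<beta> n w))"
      by (simp add: ak norm_inverse divide_inverse)
    also have "\<dots> \<le> 1 + (\<Sum>k<n. norm z ^ N1) * norm z ^ N2"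
    proof -
      have nwp: "norm w ^ M = inverse (norm z ^ M)" for M by (simp add: nw power_inverse)
      have "norm (\<beta> k w) \<le> norm z ^ N1" if "k < n" for k
      proof -
        have "norm (\<beta> k w) * inverse (norm z ^ N1) \<le> 1" using P that nwp by auto
        thus ?thesis using z1 by (simp add: field_simps)
      qed
      hence s: "(\<Sum>k<n. norm (\<beta> k w)) \<le> (\<Sum>k<n. norm z ^ N1)" by (intro sum_mono) auto
      have "norm (inverse (\<beta> n w)) * inverse (norm z ^ N2) \<le> 1" using P nwp by auto
      hence i: "norm (inverse (\<beta> n w)) \<le> norm z ^ N2" using z1 by (simp add: field_simps)
      show ?thesis using s i by (intro add_left_mono mult_mono) (auto intro: sum_nonneg)
    qed
    also have "\<dots> = 1 + real n * norm z ^ (N1 + N2)" by (simp add: power_add)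
    also have "\<dots> \<le> (1 + real n) * norm z ^ (N1 + N2)"
    proof -
      have "1 \<le> norm z ^ (N1 + N2)" using z1 by (intro one_le_power) auto
      thus ?thesis by (simp add: algebra_simps)
    qed
    finally show ?thesis .
  qed
  show ?thesis
    by (rule exI[of _ R0], rule exI[of _ "1 + real n"], rule exI[of _ "N1 + N2"])
       (use d bound in \<open>auto simp: R0_def\<close>)
qed

lemma rational_from_growth:
  fixes f :: "complex \<Rightarrow> complex"
  assumes f: "f nicely_meromorphic_on UNIV" and R0: "R0 \<ge> 1" and C: "C \<ge> 0"
    and bd: "\<forall>z. norm z \<ge> R0 \<longrightarrow> \<not> is_pole f z \<longrightarrow> norm (f z) \<le> C * norm z ^ N"
  shows "\<exists>p q. q \<noteq> 0 \<and> (\<forall>z. poly q z \<noteq> 0 \<longrightarrow> f z = poly p z / poly q z)"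
proof -
  have fm: "f meromorphic_on UNIV" using f by (simp add: nicely_meromorphic_on_def)
  have iso: "isolated_singularity_at f z" for z
    by (rule meromorphic_on_isolated_singularity, rule meromorphic_on_subset[OF fm]) auto
  define Pl where "Pl = {z. is_pole f z}"
  have Pls: "Pl sparse_in UNIV" unfolding Pl_def using f by (rule poles_sparse)
  have pb: "norm z < R0 + 1" if "is_pole f z" for z
  proof (rule ccontr)
    assume nz: "\<not> norm z < R0 + 1"
    have ev1: "\<forall>\<^sub>F w in at z. \<not> is_pole f w" by (rule eventually_not_pole[OF iso])
    have ev2: "\<forall>\<^sub>F w in at z. dist w z < 1" unfolding eventually_at by (rule exI[of _ 1]) auto
    have "filterlim f at_infinity (at z)" using that by (simp add: is_pole_def)
    hence ev3: "\<forall>\<^sub>F w in at z. C * (norm z + 1) ^ N + 1 \<le> norm (f w)"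
    proof -
      have "0 \<le> C * (norm z + 1) ^ N" using C by simp
      hence "C * (norm z + 1) ^ N + 1 > 0" by linarith
      thus ?thesis using \<open>filterlim f at_infinity (at z)\<close>
        by (simp add: filterlim_at_infinity[OF order.refl])
    qed
    have "\<forall>\<^sub>F w in at z. False"
      using ev1 ev2 ev3
    proof eventually_elim
      case (elim w)
      have "norm w \<ge> norm z - dist w z" using norm_triangle_ineq[of "z - w" w] by (simp add: dist_norm norm_minus_commute)
      hence w1: "norm w \<ge> R0" using elim nz by linarith
      have w2: "norm w \<le> norm z + 1"
        using elim(2) norm_triangle_ineq[of "w - z" z] by (simp add: dist_norm)
      have "norm (f w) \<le> C * norm w ^ N" using bd w1 elim(1) by blast
      also have "\<dots> \<le> C * (norm z + 1) ^ N" using C w2 by (intro mult_left_mono power_mono) auto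
      finally show False using elim(3) by linarith
    qed
    thus False by (simp add: eventually_False)
  qed
  have Plsub: "Pl \<subseteq> cball 0 (R0 + 1)" using pb by (auto simp: Pl_def less_imp_le)
  have Plfin: "finite Pl"
  proof -
    have "finite (cball 0 (R0 + 1) \<inter> Pl)"
      by (rule sparse_in_compact_finite[OF sparse_in_subset[OF Pls]]) auto
    moreover have "cball 0 (R0 + 1) \<inter> Pl = Pl" using Plsub by auto
    ultimately show ?thesis by simp
  qed
  have exN: "\<forall>p\<in>Pl. \<exists>N. \<forall>\<^sub>F w in at p. \<forall>M\<ge>N. norm (f w) * norm (w - p) ^ M \<le> 1"
    using mero_bound meromorphic_on_subset[OF fm] by blast
  obtain Nf where Nf: "\<forall>p\<in>Pl. \<forall>\<^sub>F w in at p. \<forall>M\<ge>Nf p. norm (f w) * norm (w - p) ^ M \<le> 1"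
    using bchoice[OF exN] by blast
  define K where "K = (\<Sum>p\<in>Pl. Nf p) + 1"
  have K1: "K \<ge> 1" by (simp add: K_def)
  have NfK: "Nf p \<le> K - 1" if "p \<in> Pl" for p
    unfolding K_def using that Plfin by (simp add: member_le_sum)
  define q where "q = (\<Prod>p\<in>Pl. [:-p, 1:] ^ K)"
  have polyq: "poly q z = (\<Prod>p\<in>Pl. (z - p) ^ K)" for z
    by (simp add: q_def poly_prod poly_power)
  have q0: "q \<noteq> 0" using Plfin by (simp add: q_def)
  have qz: "poly q z = 0 \<longleftrightarrow> z \<in> Pl" for z
    using Plfin K1 by (simp add: polyq)
  define hf where "hf = (\<lambda>z. poly q z * f z)"
  have fan: "f analytic_on (-Pl)"
    by (rule nicely_meromorphic_without_singularities)
       (use nicely_meromorphic_on_subset[OF f] in \<open>auto simp: Pl_def\<close>)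
  have fhol: "f holomorphic_on (-Pl)" using fan analytic_imp_holomorphic by blast
  have hfhol: "hf holomorphic_on UNIV"
  proof (rule no_isolated_singularity'[of Pl])
    show "hf holomorphic_on UNIV - Pl"
      unfolding hf_def using fhol by (intro holomorphic_intros poly_holo) (auto simp: Compl_eq_Diff_UNIV)
    show "finite Pl" by fact
    show "(hf \<longlongrightarrow> hf p) (at p within UNIV)" if p: "p \<in> Pl" for p
    proof -
      have hfp: "hf p = 0" using p qz by (simp add: hf_def)
      define q' where "q' = (\<Prod>p'\<in>Pl-{p}. [:-p', 1:] ^ K)"
      have pq: "poly q w = (w - p) ^ K * poly q' w" for w
        using Plfin p by (simp add: polyq q'_def poly_prod poly_power prod.remove)
      have lim: "((\<lambda>w. norm (w - p) * norm (poly q' w)) \<longlongrightarrow> norm (p - p) * norm (poly q' p)) (at p)"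
        by (intro tendsto_intros)
      have "(hf \<longlongrightarrow> 0) (at p)"
      proof (rule Lim_null_comparison)
        show "((\<lambda>w. norm (w - p) * norm (poly q' w)) \<longlongrightarrow> 0) (at p)" using lim by simp
        show "\<forall>\<^sub>F w in at p. norm (hf w) \<le> norm (w - p) * norm (poly q' w)"
          using bspec[OF Nf p]
        proof eventually_elim
          case (elim w)
          hence b: "norm (f w) * norm (w - p) ^ (K - 1) \<le> 1" using NfK[OF p] by blast
          have KS: "norm (w - p) ^ K = norm (w - p) * norm (w - p) ^ (K - 1)"
            using K1 by (metis Suc_diff_1 less_le_trans zero_less_one power_Suc)
          have "norm (hf w) = norm (w - p) ^ K * norm (poly q' w) * norm (f w)"
            by (simp add: hf_def pq norm_mult norm_power)
          also have "\<dots> = norm (w - p) * (norm (f w) * norm (w - p) ^ (K - 1)) * norm (poly q' w)"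
            unfolding KS by (simp only: mult_ac)
          also have "\<dots> \<le> norm (w - p) * 1 * norm (poly q' w)"
            using b by (intro mult_mono mult_left_mono) auto
          finally show ?case by simp
        qed
      qed
      thus ?thesis using hfp by simp
    qed
  qed auto
  define Bq where "Bq = (\<Sum>i\<le>degree q. norm (coeff q i))"
  have hfbd: "norm (hf z) \<le> (Bq * C) * norm z ^ (degree q + N)" if z: "R0 + 1 \<le> norm z" for z
  proof -
    have z1: "norm z \<ge> 1" using z R0 by linarith
    have np: "\<not> is_pole f z" using pb z by force
    have "norm (hf z) = norm (poly q z) * norm (f z)" by (simp add: hf_def norm_mult)
    also have "\<dots> \<le> (Bq * norm z ^ degree q) * (C * norm z ^ N)"
    proof (rule mult_mono)
      show "norm (poly q z) \<le> Bq * norm z ^ degree q" using poly_bound[OF z1, of q] by (simp add: Bq_def)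
      show "norm (f z) \<le> C * norm z ^ N" using bd z np R0 by auto
      show "0 \<le> Bq * norm z ^ degree q" unfolding Bq_def by (intro mult_nonneg_nonneg sum_nonneg) auto
    qed simp
    also have "\<dots> = (Bq * C) * norm z ^ (degree q + N)" by (simp add: power_add mult_ac)
    finally show ?thesis .
  qed
  define m where "m = degree q + N"
  define c where "c = (\<lambda>k. (deriv ^^ k) hf 0 / fact k)"
  have hfeq: "hf \<xi> = (\<Sum>k\<le>m. c k * \<xi> ^ k)" for \<xi>
    unfolding c_def m_def using Liouville_polynomial[OF hfhol hfbd] by simp
  define pp where "pp = (\<Sum>k\<le>m. monom (c k) k)"
  have ppeq: "poly pp z = hf z" for z by (simp add: pp_def poly_sum poly_monom hfeq)
  show ?thesis
  proof (intro exI conjI allI impI)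
    show "q \<noteq> 0" by fact
    fix z assume "poly q z \<noteq> 0"
    thus "f z = poly pp z / poly q z" by (simp add: ppeq hf_def)
  qed
qed

definition mu :: "complex poly \<Rightarrow> nat" where
  "mu p = size (filter_mset (\<lambda>a. norm a < 1) (proots p))"

lemma mu_zero_iff:
  assumes "p \<noteq> 0" shows "mu p = 0 \<longleftrightarrow> (\<forall>a. poly p a = 0 \<longrightarrow> norm a \<ge> 1)"
proof -
  have "mu p = 0 \<longleftrightarrow> (\<forall>a. a \<in># proots p \<longrightarrow> \<not> norm a < 1)"
    unfolding mu_def by (simp only: size_eq_0_iff_empty filter_mset_eq_mempty_iff)
  also have "\<dots> \<longleftrightarrow> (\<forall>a. poly p a = 0 \<longrightarrow> norm a \<ge> 1)"
    using set_count_proots[OF assms] by (simp add: not_less)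
  finally show ?thesis .
qed

lemma fb_mult:
  assumes "finite_blaschke B" "norm a < 1"
  shows "finite_blaschke (\<lambda>z. B z * ((z - a) / (1 - cnj a * z)))"
proof -
  obtain \<theta> as where as: "\<forall>a\<in>set as. norm a < 1"
    and B: "B = (\<lambda>z. exp (\<i> * of_real \<theta>) * prod_list (map (\<lambda>a. (z - a) / (1 - cnj a * z)) as))"
    using assms(1) unfolding finite_blaschke_def by blast
  have eq: "(\<lambda>z. B z * ((z - a) / (1 - cnj a * z))) =
      (\<lambda>z. exp (\<i> * of_real \<theta>) * prod_list (map (\<lambda>a. (z - a) / (1 - cnj a * z)) (a # as)))"
    by (rule ext) (simp only: B list.map prod_list.Cons mult_ac)
  have as': "\<forall>x\<in>set (a # as). norm x < 1" using as assms(2) by simp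
  show ?thesis unfolding finite_blaschke_def
    by (rule exI[of _ \<theta>], rule exI[of _ "a # as"], rule conjI[OF as' eq])
qed

lemma fb_const:
  assumes "norm c = 1" shows "finite_blaschke (\<lambda>z. c)"
proof -
  have c0: "c \<noteq> 0" using assms by auto
  have e: "exp (\<i> * of_real (Arg c)) = c"
    using cis_Arg[OF c0] assms by (simp add: cis_conv_exp[symmetric] sgn_div_norm)
  have "(\<lambda>z. c) = (\<lambda>z. exp (\<i> * of_real (Arg c)) * prod_list (map (\<lambda>a. (z - a) / (1 - cnj a * z)) []))"
    by (simp add: e)
  thus ?thesis unfolding finite_blaschke_def
    by (intro exI[of _ "Arg c"] exI[of _ "[]"]) simp
qed

lemma mu_linear:
  assumes "p \<noteq> 0" "norm a < 1"
  shows "mu ([:-a, 1:] * p) = Suc (mu p)"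
proof -
  have e1: "proots ([:-a, 1:] * p) = {#a#} + proots p"
    using assms proots_linear_factor[of "-a"] by (subst proots_mult) auto
  have e2: "filter_mset (\<lambda>a. norm a < 1) {#a#} = {#a#}" using assms(2) by simp
  show ?thesis unfolding mu_def e1 filter_union_mset e2 by simp
qed

lemma mu_refl:
  assumes "p \<noteq> 0" "norm a < 1"
  shows "mu (p * [:1, -cnj a:]) = mu p"
proof (cases "a = 0")
  case True thus ?thesis by (simp add: one_pCons[symmetric])
next
  case False
  have eq: "[:1, -cnj a:] = smult (-cnj a) [:- inverse (cnj a), 1:]"
    using False by simp
  have pr: "proots [:1, -cnj a:] = {# inverse (cnj a) #}"
    unfolding eq using False proots_linear_factor[of "- inverse (cnj a)"] by (subst proots_smult) auto
  have "norm (inverse (cnj a)) > 1" using False assms by (simp add: norm_inverse one_less_inverse)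
  hence nl: "\<not> norm (inverse (cnj a)) < 1" by simp
  have e1: "proots (p * [:1, -cnj a:]) = proots p + {# inverse (cnj a) #}"
    using assms(1) pr by (subst proots_mult) auto
  have e2: "filter_mset (\<lambda>a. norm a < 1) {# inverse (cnj a) #} = {#}" using nl by simp
  show ?thesis unfolding mu_def e1 filter_union_mset e2 by simp
qed

definition refl_poly :: "complex poly \<Rightarrow> complex poly" where
  "refl_poly p = reflect_poly (map_poly cnj p)"

lemma degree_cnj: "degree (map_poly cnj p) = degree p"
  by (rule degree_map_poly) auto

lemma poly_refl_circle:
  assumes "norm z = 1"
  shows "poly (refl_poly p) z = z ^ degree p * cnj (poly p z)"
proof -
  have z0: "z \<noteq> 0" using assms by auto
  have iz: "inverse z = cnj z" using inv_cnj_circle[OF assms]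
    by (metis complex_cnj_cnj complex_cnj_inverse)
  have "poly (refl_poly p) z = z ^ degree (map_poly cnj p) * poly (map_poly cnj p) (inverse z)"
    unfolding refl_poly_def by (rule poly_reflect_poly_nz[OF z0])
  also have "\<dots> = z ^ degree p * cnj (poly p z)"
    unfolding degree_cnj iz poly_cnj_map complex_cnj_cnj ..
  finally show ?thesis .
qed

lemma poly_refl_root:
  assumes "z \<noteq> 0" "poly (refl_poly p) z = 0"
  shows "poly p (cnj (inverse z)) = 0"
  using assms by (simp add: refl_poly_def poly_reflect_poly_nz poly_cnj_map)

lemma no_root_aux:
  fixes p q :: "complex poly"
  assumes id: "monom 1 (degree q) * p * refl_poly p = monom 1 (degree p) * q * refl_poly q"
    and cop: "coprime p q" and rp: "\<forall>a. poly p a = 0 \<longrightarrow> norm a \<ge> 1"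
    and rq: "\<forall>a. poly q a = 0 \<longrightarrow> norm a \<ge> 1"
  shows "poly q b \<noteq> 0"
proof
  assume qb: "poly q b = 0"
  hence b1: "norm b \<ge> 1" using rq by auto
  hence b0: "b \<noteq> 0" by auto
  have pb: "poly p b \<noteq> 0"
  proof
    assume "poly p b = 0"
    hence "[:-b, 1:] dvd p" "[:-b, 1:] dvd q" using qb by (simp_all add: poly_eq_0_iff_dvd)
    hence "is_unit [:-b, 1:]" using cop coprime_common_divisor by blast
    thus False by (simp add: is_unit_pCons_iff)
  qed
  have "poly (monom 1 (degree p) * q * refl_poly q) b = 0" by (simp only: poly_mult qb mult_zero_left mult_zero_right)
  hence "poly (monom 1 (degree q) * p * refl_poly p) b = 0" by (simp only: id)
  hence "b ^ degree q * poly p b * poly (refl_poly p) b = 0" by (simp only: poly_mult poly_monom mult_1)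
  hence "poly (refl_poly p) b = 0" using b0 pb by simp
  hence r: "poly p (cnj (inverse b)) = 0" by (rule poly_refl_root[OF b0])
  hence "norm (cnj (inverse b)) \<ge> 1" using rp by blast
  hence "1 \<le> inverse (norm b)" by (simp only: complex_mod_cnj norm_inverse)
  hence "norm b \<le> 1" by (simp only: one_le_inverse_iff)
  hence "norm b = 1" using b1 by simp
  hence ceq: "cnj (inverse b) = b" using inv_cnj_circle[of b] by simp
  from r have "poly p b = 0" by (simp only: ceq)
  with pb show False by simp
qed

lemma poly_eq_on_infinite:
  fixes p q :: "complex poly"
  assumes "infinite A" "\<forall>z\<in>A. poly p z = poly q z"
  shows "p = q"
proof (rule ccontr)
  assume "p \<noteq> q"
  hence "p - q \<noteq> 0" by simp
  hence "finite {z. poly (p - q) z = 0}" by (rule poly_roots_finite)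
  moreover have "A \<subseteq> {z. poly (p - q) z = 0}" using assms(2) by auto
  ultimately show False using assms(1) finite_subset by blast
qed

lemma no_roots_const:
  fixes p :: "complex poly"
  assumes "\<forall>z. poly p z \<noteq> 0"
  shows "\<exists>c. c \<noteq> 0 \<and> p = [:c:]"
proof -
  have "\<exists>a l. a \<noteq> 0 \<and> l = 0 \<and> p = pCons a l"
    using fundamental_theorem_of_algebra_alt[of p] assms by blast
  thus ?thesis by blast
qed

lemma blaschke_base:
  fixes p q :: "complex poly"
  assumes q: "q \<noteq> 0" and A: "infinite A" "A \<subseteq> sphere 0 1"
    and pq: "\<forall>z\<in>A. poly q z \<noteq> 0 \<and> norm (poly p z) = norm (poly q z)"
    and mp: "\<forall>a. poly p a = 0 \<longrightarrow> norm a \<ge> 1" and mq: "\<forall>a. poly q a = 0 \<longrightarrow> norm a \<ge> 1"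
  shows "\<exists>B1 B2 S. finite_blaschke B1 \<and> finite_blaschke B2 \<and> finite S \<and>
            (\<forall>z. z \<notin> S \<longrightarrow> poly p z / poly q z = B1 z / B2 z)"
proof -
  define g where "g = gcd p q"
  define p0 where "p0 = p div g"
  define q0 where "q0 = q div g"
  have g0: "g \<noteq> 0" using q by (simp add: g_def)
  have pe: "p = g * p0" unfolding p0_def g_def by simp
  have qe: "q = g * q0" unfolding q0_def g_def by simp
  have cop: "coprime p0 q0" unfolding p0_def q0_def g_def using q by (intro div_gcd_coprime) auto
  have q00: "q0 \<noteq> 0" using q qe by auto
  have A0: "\<forall>z\<in>A. poly g z \<noteq> 0 \<and> poly q0 z \<noteq> 0 \<and> norm (poly p0 z) = norm (poly q0 z)"
    using pq by (auto simp: pe qe norm_mult)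
  have mp0: "\<forall>a. poly p0 a = 0 \<longrightarrow> norm a \<ge> 1" using mp by (auto simp: pe)
  have mq0: "\<forall>a. poly q0 a = 0 \<longrightarrow> norm a \<ge> 1" using mq by (auto simp: qe)
  have id: "monom 1 (degree q0) * p0 * refl_poly p0 = monom 1 (degree p0) * q0 * refl_poly q0"
  proof (rule poly_eq_on_infinite[OF A(1)], intro ballI)
    fix z assume z: "z \<in> A"
    have z1: "norm z = 1" using z A by auto
    have sq: "poly p0 z * cnj (poly p0 z) = poly q0 z * cnj (poly q0 z)"
      using A0 z by (metis complex_norm_square)
    have "poly (monom 1 (degree q0) * p0 * refl_poly p0) z
          = z ^ degree q0 * z ^ degree p0 * (poly p0 z * cnj (poly p0 z))"
      by (simp only: poly_mult poly_monom poly_refl_circle[OF z1] mult_ac mult_1)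
    also have "\<dots> = z ^ degree q0 * z ^ degree p0 * (poly q0 z * cnj (poly q0 z))"
      by (simp only: sq)
    also have "\<dots> = poly (monom 1 (degree p0) * q0 * refl_poly q0) z"
      by (simp only: poly_mult poly_monom poly_refl_circle[OF z1] mult_ac mult_1)
    finally show "poly (monom 1 (degree q0) * p0 * refl_poly p0) z = poly (monom 1 (degree p0) * q0 * refl_poly q0) z" .
  qed
  have nq0: "\<forall>z. poly q0 z \<noteq> 0" using no_root_aux[OF id cop mp0 mq0] by blast
  have np0: "\<forall>z. poly p0 z \<noteq> 0"
  proof -
    have cop': "coprime q0 p0" using cop by (simp add: coprime_commute)
    show ?thesis using no_root_aux[OF id[symmetric] cop' mq0 mp0] by blast
  qed
  obtain c0 where c0: "c0 \<noteq> 0" "p0 = [:c0:]" using no_roots_const[OF np0] by blast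
  obtain d0 where d0: "d0 \<noteq> 0" "q0 = [:d0:]" using no_roots_const[OF nq0] by blast
  obtain z0 where z0: "z0 \<in> A" using A(1) by (metis finite.emptyI ex_in_conv)
  have "norm (poly p0 z0) = norm (poly q0 z0)" using A0 z0 by blast
  hence "norm c0 = norm d0" using c0(2) d0(2) by simp
  hence nc: "norm (c0 / d0) = 1" using d0 by (simp add: norm_divide)
  have fb1: "finite_blaschke (\<lambda>z. c0 / d0)" by (rule fb_const[OF nc])
  have fb2: "finite_blaschke (\<lambda>z. 1)" by (rule fb_const) simp
  have fS: "finite {z. poly g z = 0}" using g0 by (rule poly_roots_finite)
  have eq: "poly p z / poly q z = c0 / d0 / 1" if "z \<notin> {z. poly g z = 0}" for z
  proof -
    have gz: "poly g z \<noteq> 0" using that by simp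
    have "poly p z / poly q z = (poly g z * c0) / (poly g z * d0)"
      unfolding pe qe c0(2) d0(2) by simp
    also have "\<dots> = c0 / d0 / 1" using gz by simp
    finally show ?thesis .
  qed
  show ?thesis
    by (rule exI[where x="\<lambda>z. c0/d0"], rule exI[where x="\<lambda>z. 1"], rule exI[where x="{z. poly g z = 0}"])
       (use fb1 fb2 fS eq in simp)
qed

lemma circ_norm:
  assumes "norm z = 1" shows "norm (1 - cnj a * z) = norm (z - a)"
proof -
  have "z * cnj z = 1" using complex_norm_square[of z] assms by simp
  hence "1 - cnj a * z = z * cnj (z - a)" by (simp add: algebra_simps)
  hence "norm (1 - cnj a * z) = norm z * norm (cnj (z - a))" by (simp only: norm_mult)
  thus ?thesis using assms by (simp only: complex_mod_cnj mult_1)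
qed

lemma aux_div1: "w \<noteq> 0 \<Longrightarrow> (u * w) / Q * (c / w) = c * u / (Q::complex)"
  by (cases "Q = 0") (simp_all add: field_simps)

lemma aux_div2: "w \<noteq> 0 \<Longrightarrow> c \<noteq> 0 \<Longrightarrow> P / (u * w) / (c / w) = P / (c * (u::complex))"
  by (cases "u = 0") (simp_all add: field_simps)

lemma fin_refl_set: "finite {z. 1 - cnj a * z = 0}"
proof (rule finite_subset)
  show "{z. 1 - cnj a * z = 0} \<subseteq> {inverse (cnj a)}"
  proof
    fix x assume "x \<in> {z. 1 - cnj a * z = 0}"
    hence "cnj a * x = 1" by simp
    hence "inverse (cnj a) = x" by (rule inverse_unique)
    thus "x \<in> {inverse (cnj a)}" by simp
  qed
qed auto

lemma blaschke_rat:
  fixes p q :: "complex poly"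
  assumes "q \<noteq> 0" and A: "infinite A" "A \<subseteq> sphere 0 1"
    and "\<forall>z\<in>A. poly q z \<noteq> 0 \<and> norm (poly p z) = norm (poly q z)"
  shows "\<exists>B1 B2 S. finite_blaschke B1 \<and> finite_blaschke B2 \<and> finite S \<and>
            (\<forall>z. z \<notin> S \<longrightarrow> poly p z / poly q z = B1 z / B2 z)"
proof -
  obtain z0 where z0: "z0 \<in> A" using A(1) by (metis finite.emptyI ex_in_conv)
  have main: "\<And>p q. mu p + mu q = m \<Longrightarrow> q \<noteq> 0 \<Longrightarrow>
      (\<forall>z\<in>A. poly q z \<noteq> 0 \<and> norm (poly p z) = norm (poly q z)) \<Longrightarrow>
      \<exists>B1 B2 S. finite_blaschke B1 \<and> finite_blaschke B2 \<and> finite S \<and>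
            (\<forall>z. z \<notin> S \<longrightarrow> poly p z / poly q z = B1 z / B2 z)" for m
  proof (induction m rule: less_induct)
    case (less m p q)
    note IH = less.IH and m = less.prems(1) and q = less.prems(2) and pq = less.prems(3)
    have p: "p \<noteq> 0"
    proof
      assume "p = 0"
      with pq z0 show False by auto
    qed
    show ?case
    proof (cases "\<exists>a. poly p a = 0 \<and> norm a < 1")
      case True
      then obtain a where a: "poly p a = 0" "norm a < 1" by blast
      then obtain p1 where p1: "p = [:-a, 1:] * p1" by (metis dvdE poly_eq_0_iff_dvd)
      have p10: "p1 \<noteq> 0" using p p1 by auto
      define p' where "p' = p1 * [:1, -cnj a:]"
      have "mu p' + mu q < m"
        using m mu_refl[OF p10 a(2)] mu_linear[OF p10 a(2)] p1 by (simp add: p'_def algebra_simps)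
      moreover have "\<forall>z\<in>A. poly q z \<noteq> 0 \<and> norm (poly p' z) = norm (poly q z)"
      proof
        fix z assume z: "z \<in> A"
        hence z1: "norm z = 1" using A by auto
        have "poly p' z = poly p1 z * (1 - cnj a * z)" by (simp add: p'_def algebra_simps)
        hence "norm (poly p' z) = norm (poly p1 z) * norm (1 - cnj a * z)" by (simp only: norm_mult)
        hence "norm (poly p' z) = norm (poly p1 z) * norm (z - a)" by (simp only: circ_norm[OF z1])
        also have "\<dots> = norm (poly p z)"
        proof -
          have "poly p z = (z - a) * poly p1 z" by (simp add: p1 algebra_simps)
          thus ?thesis by (simp only: norm_mult mult.commute)
        qed
        finally show "poly q z \<noteq> 0 \<and> norm (poly p' z) = norm (poly q z)" using pq z by auto
      qed
      ultimately obtain B1 B2 S where B: "finite_blaschke B1" "finite_blaschke B2" "finite S"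
          "\<And>z. z \<notin> S \<Longrightarrow> poly p' z / poly q z = B1 z / B2 z"
        using IH[of _ p' q] q by blast
      define S' where "S' = S \<union> {z. 1 - cnj a * z = 0}"
      have "finite S'" unfolding S'_def using B(3) fin_refl_set by auto
      moreover have "finite_blaschke (\<lambda>z. B1 z * ((z - a) / (1 - cnj a * z)))"
        by (rule fb_mult[OF B(1) a(2)])
      moreover have "poly p z / poly q z = B1 z * ((z - a) / (1 - cnj a * z)) / B2 z"
        if z: "z \<notin> S'" for z
      proof -
        have nz: "1 - cnj a * z \<noteq> 0" using z by (auto simp: S'_def)
        have "B1 z * ((z - a) / (1 - cnj a * z)) / B2 z = (B1 z / B2 z) * ((z - a) / (1 - cnj a * z))"
          by simp
        also have "\<dots> = poly p' z / poly q z * ((z - a) / (1 - cnj a * z))"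
          using B(4)[of z] z by (simp add: S'_def)
        also have "\<dots> = poly p z / poly q z"
        proof -
          have "poly p' z = poly p1 z * (1 - cnj a * z)" by (simp add: p'_def algebra_simps)
          moreover have "poly p z = (z - a) * poly p1 z" by (simp add: p1 algebra_simps)
          ultimately show ?thesis using aux_div1[OF nz] by simp
        qed
        finally show ?thesis by simp
      qed
      ultimately show ?thesis using B(2) by blast
    next
      case False
      hence mp: "\<forall>a. poly p a = 0 \<longrightarrow> norm a \<ge> 1" by (auto simp: not_less)
      show ?thesis
      proof (cases "\<exists>b. poly q b = 0 \<and> norm b < 1")
        case True
        then obtain b where b: "poly q b = 0" "norm b < 1" by blast
        then obtain q1 where q1: "q = [:-b, 1:] * q1" by (metis dvdE poly_eq_0_iff_dvd)
        have q10: "q1 \<noteq> 0" using q q1 by auto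
        define q' where "q' = q1 * [:1, -cnj b:]"
        have q'0: "q' \<noteq> 0" unfolding q'_def using q10 by (intro no_zero_divisors) auto
        have "mu p + mu q' < m"
          using m mu_refl[OF q10 b(2)] mu_linear[OF q10 b(2)] q1 by (simp add: q'_def algebra_simps)
        moreover have "\<forall>z\<in>A. poly q' z \<noteq> 0 \<and> norm (poly p z) = norm (poly q' z)"
        proof
          fix z assume z: "z \<in> A"
          hence z1: "norm z = 1" using A by auto
          have "poly q' z = poly q1 z * (1 - cnj b * z)" by (simp add: q'_def algebra_simps)
          hence "norm (poly q' z) = norm (poly q1 z) * norm (1 - cnj b * z)" by (simp only: norm_mult)
          hence "norm (poly q' z) = norm (poly q1 z) * norm (z - b)" by (simp only: circ_norm[OF z1])
          also have "\<dots> = norm (poly q z)"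
        proof -
          have "poly q z = (z - b) * poly q1 z" by (simp add: q1 algebra_simps)
          thus ?thesis by (simp only: norm_mult mult.commute)
        qed
          finally have "norm (poly q' z) = norm (poly q z)" .
          thus "poly q' z \<noteq> 0 \<and> norm (poly p z) = norm (poly q' z)" using pq z by auto
        qed
        ultimately obtain B1 B2 S where B: "finite_blaschke B1" "finite_blaschke B2" "finite S"
            "\<And>z. z \<notin> S \<Longrightarrow> poly p z / poly q' z = B1 z / B2 z"
          using IH[of _ p q'] q'0 by blast
        define S' where "S' = S \<union> {z. 1 - cnj b * z = 0} \<union> {b}"
        have "finite S'" unfolding S'_def using B(3) fin_refl_set by auto
        moreover have "finite_blaschke (\<lambda>z. B2 z * ((z - b) / (1 - cnj b * z)))"
          by (rule fb_mult[OF B(2) b(2)])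
        moreover have "poly p z / poly q z = B1 z / (B2 z * ((z - b) / (1 - cnj b * z)))"
          if z: "z \<notin> S'" for z
        proof -
          have nz: "1 - cnj b * z \<noteq> 0" "z - b \<noteq> 0" using z by (auto simp: S'_def)
          have "B1 z / (B2 z * ((z - b) / (1 - cnj b * z))) = (B1 z / B2 z) / ((z - b) / (1 - cnj b * z))"
            by simp
          also have "\<dots> = poly p z / poly q' z / ((z - b) / (1 - cnj b * z))"
            using B(4)[of z] z by (simp add: S'_def)
          also have "\<dots> = poly p z / poly q z"
          proof -
            have "poly q' z = poly q1 z * (1 - cnj b * z)" by (simp add: q'_def algebra_simps)
            moreover have "poly q z = (z - b) * poly q1 z" by (simp add: q1 algebra_simps)
            ultimately show ?thesis using aux_div2[OF nz] by simp
          qed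
          finally show ?thesis by simp
        qed
        ultimately show ?thesis using B(1) by blast
      next
        case False
        hence mq: "\<forall>a. poly q a = 0 \<longrightarrow> norm a \<ge> 1" by (auto simp: not_less)
        show ?thesis by (rule blaschke_base[OF q A pq mp mq])
      qed
    qed
  qed
  show ?thesis by (rule main[OF refl assms(1) assms(4)])
qed

theorem theorem1:
  fixes f :: "complex \<Rightarrow> complex" and A :: "complex set" and P :: "real poly poly"
  assumes "f nicely_meromorphic_on UNIV"
    and "\<not> f constant_on UNIV"
    and "A \<subseteq> sphere 0 1" and "compact A" and "connected A" and "\<exists>a\<in>A. \<exists>b\<in>A. a \<noteq> b"
    and "irreducible P" and "\<not> (\<exists>c. P = [:[:c:]:])"
    and "\<forall>z\<in>A. \<not> is_pole f z \<and> f z \<in> alg_curve P"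
  shows "rational_function f \<and> (alg_curve P = sphere 0 1 \<longrightarrow> blaschke_quotient f)"
proof -
  note f = assms(1) and nc = assms(2) and As = assms(3) and Ac = assms(5)
  have P0: "P \<noteq> 0" using assms(7) by auto
  obtain R where R0: "R \<noteq> 0"
    and Rrep: "\<And>u. poly (poly R [:u:]) (cnj u) = complex_of_real (eval2 P (Re u) (Im u))"
    using rep_exists[OF P0] by blast
  obtain a b where ab: "a \<in> A" "b \<in> A" "a \<noteq> b" using assms(6) by blast
  have nsing: "A \<noteq> {x}" for x using ab by auto
  have lim: "a islimpt A" by (rule connected_imp_perfect[OF Ac ab(1) nsing])
  have np: "\<forall>z\<in>A. \<not> is_pole f z" using assms(9) by blast
  have RA: "\<forall>z\<in>A. poly (poly R [:f z:]) (cnj (f z)) = 0"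
  proof
    fix z assume "z \<in> A"
    hence "f z \<in> alg_curve P" using assms(9) by blast
    hence "eval2 P (Re (f z)) (Im (f z)) = 0" by (simp add: alg_curve_def)
    thus "poly (poly R [:f z:]) (cnj (f z)) = 0" by (simp add: Rrep)
  qed
  have rel: "poly (poly R [:f z:]) (cnj (f (inverse (cnj z)))) = 0"
    if "z \<noteq> 0" "\<not> is_pole f z" "\<not> is_pole f (inverse (cnj z))" for z
    by (rule G_zero[OF f As ab(1) lim np RA that])
  obtain R0 C N where RCN: "R0 \<ge> 1" "C \<ge> 0"
      "\<forall>z. norm z \<ge> R0 \<longrightarrow> \<not> is_pole f z \<longrightarrow> norm (f z) \<le> C * norm z ^ N"
    using growth[OF f nc R0 rel] by blast
  obtain p q where pq: "q \<noteq> 0" "\<And>z. poly q z \<noteq> 0 \<Longrightarrow> f z = poly p z / poly q z"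
    using rational_from_growth[OF f RCN] by blast
  have rat: "rational_function f" unfolding rational_function_def using pq by blast
  have bq: "blaschke_quotient f" if circ: "alg_curve P = sphere 0 1"
  proof -
    have n1: "norm (f z) = 1" if "z \<in> A" for z using assms(9) that circ by auto
    have Ainf: "infinite A" using lim islimpt_finite by blast
    define A' where "A' = A - {z. poly q z = 0}"
    have A'inf: "infinite A'" unfolding A'_def
      by (rule Diff_infinite_finite[OF poly_roots_finite[OF pq(1)] Ainf])
    have A's: "A' \<subseteq> sphere 0 1" using As by (auto simp: A'_def)
    have A'pq: "\<forall>z\<in>A'. poly q z \<noteq> 0 \<and> norm (poly p z) = norm (poly q z)"
    proof
      fix z assume z: "z \<in> A'"
      hence qz: "poly q z \<noteq> 0" and zA: "z \<in> A" by (auto simp: A'_def)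
      have "norm (poly p z / poly q z) = 1" using n1[OF zA] pq(2)[OF qz] by simp
      hence "norm (poly p z) = norm (poly q z)" using qz by (simp add: norm_divide field_simps)
      thus "poly q z \<noteq> 0 \<and> norm (poly p z) = norm (poly q z)" using qz by simp
    qed
    obtain B1 B2 S where B: "finite_blaschke B1" "finite_blaschke B2" "finite S"
        "\<And>z. z \<notin> S \<Longrightarrow> poly p z / poly q z = B1 z / B2 z"
      using blaschke_rat[OF pq(1) A'inf A's A'pq] by blast
    define S' where "S' = S \<union> {z. poly q z = 0}"
    have "finite S'" unfolding S'_def using B(3) poly_roots_finite[OF pq(1)] by simp
    moreover have "f z = B1 z / B2 z" if "z \<notin> S'" for z
      using that B(4)[of z] pq(2)[of z] by (simp add: S'_def)
    ultimately show ?thesis unfolding blaschke_quotient_def using B(1,2) by blast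
  qed
  show ?thesis using rat bq by blast
qed

end
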